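(* The Banach lattice $c_0$ is complemented in $FBL[c_0]$: there exist a Banach lattice homomorphism $u: c_0 \to FBL[c_0]$ which is an isometric embedding and a surjective Banach lattice homomorphism $T: FBL[c_0]\to c_0$ with $T\circ u = \mathrm{id}_{c_0}$.
   Context: For a Banach space $E$, for $x\in E$ let $\delta_x: E^*\to\mathbb{R}$, $\delta_x(x^* )=x^*(x)$. For $f: E^*\to\mathbb{R}$ put $$\|f\|_{FBL[E]} = \sup \Big\{\sum_{i = 1}^n |f(x_{i}^{*})| : n \in \mathbb{N},\ x_1^{*}, \ldots, x_n^{*} \in E^{*},\ \sup_{x \in B_E} \sum_{i=1}^n |x_i^{*}(x)| \leq 1 \Big\}.$$ The free Banach lattice $FBL[E]$ generated by $E$ is the closure, with respect to this norm, of the vector sublattice of $\mathbb{R}^{E^*}$ (pointwise operations and order) generated by $\{\delta_x : x\in E\}$. Here $E=c_0$ with $c_0^*=\ell_1$. In the paper the map $T$ is $T(f)=(f(e_1^* ),f(e_2^* ),\ldots)$, where $e_n^*$ are the unit vectors of $\ell_1$. *)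

theory Defs
  imports Complex_Main
begin

definition c0 :: "(nat \<Rightarrow> real) set" where
  "c0 = {x. x \<longlonglongrightarrow> 0}"

definition c0_norm :: "(nat \<Rightarrow> real) \<Rightarrow> real" where
  "c0_norm x = (SUP n. \<bar>x n\<bar>)"

text \<open>The dual c_0^* = l_1, acting by the usual pairing.\<close>
definition l1 :: "(nat \<Rightarrow> real) set" where
  "l1 = {a. summable (\<lambda>n. \<bar>a n\<bar>)}"

definition pairing :: "(nat \<Rightarrow> real) \<Rightarrow> (nat \<Rightarrow> real) \<Rightarrow> real" where
  "pairing a x = (\<Sum>n. a n * x n)"

text \<open>Functions on E^* = l_1 are represented as functions on all sequences
  that vanish outside l_1.\<close>
definition delta :: "(nat \<Rightarrow> real) \<Rightarrow> ((nat \<Rightarrow> real) \<Rightarrow> real)" where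
  "delta x = (\<lambda>a. if a \<in> l1 then pairing a x else 0)"

definition admissible :: "nat \<Rightarrow> (nat \<Rightarrow> (nat \<Rightarrow> real)) \<Rightarrow> bool" where
  "admissible n xs \<longleftrightarrow> (\<forall>i<n. xs i \<in> l1) \<and>
     (\<forall>x\<in>c0. c0_norm x \<le> 1 \<longrightarrow> (\<Sum>i<n. \<bar>pairing (xs i) x\<bar>) \<le> 1)"

definition fbl_norm_set :: "((nat \<Rightarrow> real) \<Rightarrow> real) \<Rightarrow> real set" where
  "fbl_norm_set f = {(\<Sum>i<n. \<bar>f (xs i)\<bar>) | n xs. admissible n xs}"

definition fbl_norm :: "((nat \<Rightarrow> real) \<Rightarrow> real) \<Rightarrow> real" where
  "fbl_norm f = Sup (fbl_norm_set f)"

inductive_set fvl :: "((nat \<Rightarrow> real) \<Rightarrow> real) set" where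
  gen: "x \<in> c0 \<Longrightarrow> delta x \<in> fvl"
| add: "f \<in> fvl \<Longrightarrow> g \<in> fvl \<Longrightarrow> (\<lambda>a. f a + g a) \<in> fvl"
| scale: "f \<in> fvl \<Longrightarrow> (\<lambda>a. c * f a) \<in> fvl"
| max: "f \<in> fvl \<Longrightarrow> g \<in> fvl \<Longrightarrow> (\<lambda>a. max (f a) (g a)) \<in> fvl"

definition FBL :: "((nat \<Rightarrow> real) \<Rightarrow> real) set" where
  "FBL = {f. (\<forall>a. a \<notin> l1 \<longrightarrow> f a = 0) \<and> bdd_above (fbl_norm_set f) \<and>
            (\<forall>e>0. \<exists>g\<in>fvl. fbl_norm (\<lambda>a. f a - g a) < e)}"

definition bl_hom_c0_FBL :: "((nat \<Rightarrow> real) \<Rightarrow> ((nat \<Rightarrow> real) \<Rightarrow> real)) \<Rightarrow> bool" where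
  "bl_hom_c0_FBL u \<longleftrightarrow> (\<forall>x\<in>c0. u x \<in> FBL) \<and>
     (\<forall>x\<in>c0. \<forall>y\<in>c0. u (\<lambda>n. x n + y n) = (\<lambda>a. u x a + u y a)) \<and>
     (\<forall>x\<in>c0. \<forall>c. u (\<lambda>n. c * x n) = (\<lambda>a. c * u x a)) \<and>
     (\<forall>x\<in>c0. \<forall>y\<in>c0. u (\<lambda>n. max (x n) (y n)) = (\<lambda>a. max (u x a) (u y a))) \<and>
     (\<exists>C. \<forall>x\<in>c0. fbl_norm (u x) \<le> C * c0_norm x)"

definition bl_hom_FBL_c0 :: "(((nat \<Rightarrow> real) \<Rightarrow> real) \<Rightarrow> (nat \<Rightarrow> real)) \<Rightarrow> bool" where
  "bl_hom_FBL_c0 T \<longleftrightarrow> (\<forall>f\<in>FBL. T f \<in> c0) \<and>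
     (\<forall>f\<in>FBL. \<forall>g\<in>FBL. T (\<lambda>a. f a + g a) = (\<lambda>n. T f n + T g n)) \<and>
     (\<forall>f\<in>FBL. \<forall>c. T (\<lambda>a. c * f a) = (\<lambda>n. c * T f n)) \<and>
     (\<forall>f\<in>FBL. \<forall>g\<in>FBL. T (\<lambda>a. max (f a) (g a)) = (\<lambda>n. max (T f n) (T g n))) \<and>
     (\<exists>C. \<forall>f\<in>FBL. c0_norm (T f) \<le> C * fbl_norm f)"

end

theory Submission
  imports Defs
begin

definition unitv :: "nat \<Rightarrow> nat \<Rightarrow> real" where
  "unitv k = (\<lambda>m. if m = k then 1 else 0)"

lemma c0_bdd: "x \<in> c0 \<Longrightarrow> bdd_above (range (\<lambda>n. \<bar>x n\<bar>))"
proof -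
  assume "x \<in> c0"
  hence "convergent x" unfolding c0_def convergent_def by blast
  hence "Bseq x" by (rule convergent_imp_Bseq)
  then obtain K where "\<forall>n. norm (x n) \<le> K" unfolding Bseq_def by blast
  thus ?thesis by (intro bdd_aboveI[where M=K]) auto
qed

lemma c0_le: "x \<in> c0 \<Longrightarrow> \<bar>x n\<bar> \<le> c0_norm x"
  unfolding c0_norm_def by (rule cSUP_upper[OF _ c0_bdd]) auto

lemma c0_norm_nonneg: "x \<in> c0 \<Longrightarrow> 0 \<le> c0_norm x"
  using c0_le[of x 0] by linarith

lemma l1_bdd: "a \<in> l1 \<Longrightarrow> bdd_above (range (\<lambda>n. \<bar>a n\<bar>))"
proof -
  assume "a \<in> l1"
  hence "(\<lambda>n. \<bar>a n\<bar>) \<longlonglongrightarrow> 0" unfolding l1_def by (auto intro: summable_LIMSEQ_zero)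
  hence "convergent (\<lambda>n. \<bar>a n\<bar>)" unfolding convergent_def by blast
  hence "Bseq (\<lambda>n. \<bar>a n\<bar>)" by (rule convergent_imp_Bseq)
  then obtain K where "\<forall>n. norm (\<bar>a n\<bar>) \<le> K" unfolding Bseq_def by blast
  thus ?thesis by (intro bdd_aboveI[where M=K]) auto
qed

definition Mx :: "(nat \<Rightarrow> real) \<Rightarrow> real" where
  "Mx a = (SUP m. \<bar>a m\<bar>)"

lemma Mx_le: "a \<in> l1 \<Longrightarrow> \<bar>a n\<bar> \<le> Mx a"
  unfolding Mx_def by (rule cSUP_upper[OF _ l1_bdd]) auto

lemma Mx_nonneg: "a \<in> l1 \<Longrightarrow> 0 \<le> Mx a"
  using Mx_le[of a 0] by linarith

lemma pairing_unitv: "pairing (unitv k) x = x k"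
proof -
  have "(\<lambda>m. unitv k m * x m) = (\<lambda>m. if m = k then x m else 0)"
    by (auto simp: unitv_def)
  thus ?thesis unfolding pairing_def using sums_single[of k x] sums_unique by metis
qed

lemma pairing_unitv2: "pairing a (unitv k) = a k"
proof -
  have "(\<lambda>m. a m * unitv k m) = (\<lambda>m. if m = k then a m else 0)"
    by (auto simp: unitv_def)
  thus ?thesis unfolding pairing_def using sums_single[of k a] sums_unique by metis
qed

lemma unitv_l1: "unitv k \<in> l1"
proof -
  have "(\<lambda>m. \<bar>unitv k m\<bar>) = (\<lambda>m. if m = k then 1 else 0)"
    by (auto simp: unitv_def)
  thus ?thesis unfolding l1_def using summable_single[of k "\<lambda>_. 1::real"] by simp
qed

lemma unitv_c0: "unitv k \<in> c0"
proof -
  have "eventually (\<lambda>m. unitv k m = 0) sequentially"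
    unfolding eventually_sequentially by (rule exI[of _ "Suc k"]) (auto simp: unitv_def)
  hence "unitv k \<longlonglongrightarrow> 0" by (simp add: tendsto_eventually)
  thus ?thesis unfolding c0_def by simp
qed

lemma admissible_unitv: "admissible 1 (\<lambda>_. unitv k)"
  unfolding admissible_def using unitv_l1 by (auto simp: pairing_unitv) (meson c0_le order_trans)

lemma sign_choice:
  fixes A :: "nat \<Rightarrow> nat \<Rightarrow> real" and \<nu> :: "nat \<Rightarrow> nat"
  assumes "finite S"
  shows "\<forall>r. \<exists>\<epsilon>. (\<forall>k. \<epsilon> k = 1 \<or> \<epsilon> k = -1) \<and>
     (\<Sum>i<n. (if \<nu> i \<in> S then \<bar>A i (\<nu> i)\<bar> else \<bar>r i\<bar>)) \<le> (\<Sum>i<n. \<bar>r i + (\<Sum>k\<in>S. A i k * \<epsilon> k)\<bar>)"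
  using assms
proof (induction S rule: finite_induct)
  case empty
  show ?case by (auto intro: exI[of _ "\<lambda>_. 1"])
next
  case (insert k S)
  show ?case
  proof
    fix r :: "nat \<Rightarrow> real"
    obtain ep where p: "\<forall>k. ep k = 1 \<or> ep k = -1"
      "(\<Sum>i<n. if \<nu> i \<in> S then \<bar>A i (\<nu> i)\<bar> else \<bar>r i + A i k\<bar>) \<le> (\<Sum>i<n. \<bar>(r i + A i k) + (\<Sum>k\<in>S. A i k * ep k)\<bar>)"
      using insert.IH[rule_format, of "\<lambda>i. r i + A i k"] by auto
    obtain em where m: "\<forall>k. em k = 1 \<or> em k = -1"
      "(\<Sum>i<n. if \<nu> i \<in> S then \<bar>A i (\<nu> i)\<bar> else \<bar>r i - A i k\<bar>) \<le> (\<Sum>i<n. \<bar>(r i - A i k) + (\<Sum>k\<in>S. A i k * em k)\<bar>)"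
      using insert.IH[rule_format, of "\<lambda>i. r i - A i k"] by auto
    define ep' where "ep' = ep(k := 1)"
    define em' where "em' = em(k := -1)"
    have sp: "(\<Sum>k'\<in>insert k S. A i k' * ep' k') = A i k + (\<Sum>k'\<in>S. A i k' * ep k')" for i
    proof -
      have "(\<Sum>k'\<in>S. A i k' * ep' k') = (\<Sum>k'\<in>S. A i k' * ep k')"
        using insert.hyps by (intro sum.cong) (auto simp: ep'_def)
      thus ?thesis using insert.hyps by (simp add: ep'_def)
    qed
    have sm: "(\<Sum>k'\<in>insert k S. A i k' * em' k') = - A i k + (\<Sum>k'\<in>S. A i k' * em k')" for i
    proof -
      have "(\<Sum>k'\<in>S. A i k' * em' k') = (\<Sum>k'\<in>S. A i k' * em k')"
        using insert.hyps by (intro sum.cong) (auto simp: em'_def)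
      thus ?thesis using insert.hyps by (simp add: em'_def)
    qed
    let ?L = "(\<Sum>i<n. (if \<nu> i \<in> insert k S then \<bar>A i (\<nu> i)\<bar> else \<bar>r i\<bar>))"
    have key: "2 * ?L \<le> (\<Sum>i<n. if \<nu> i \<in> S then \<bar>A i (\<nu> i)\<bar> else \<bar>r i + A i k\<bar>)
        + (\<Sum>i<n. if \<nu> i \<in> S then \<bar>A i (\<nu> i)\<bar> else \<bar>r i - A i k\<bar>)"
      unfolding sum.distrib[symmetric] sum_distrib_left by (rule sum_mono) auto
    have ep'_ok: "\<forall>j. ep' j = 1 \<or> ep' j = -1" using p(1) by (auto simp: ep'_def)
    have em'_ok: "\<forall>j. em' j = 1 \<or> em' j = -1" using m(1) by (auto simp: em'_def)
    show "\<exists>\<epsilon>. (\<forall>k. \<epsilon> k = 1 \<or> \<epsilon> k = -1) \<and> ?L \<le> (\<Sum>i<n. \<bar>r i + (\<Sum>k\<in>insert k S. A i k * \<epsilon> k)\<bar>)"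
    proof (cases "?L \<le> (\<Sum>i<n. if \<nu> i \<in> S then \<bar>A i (\<nu> i)\<bar> else \<bar>r i + A i k\<bar>)")
      case True
      thus ?thesis using p(2) ep'_ok by (intro exI[of _ ep']) (auto simp: sp add.assoc)
    next
      case False
      hence "?L \<le> (\<Sum>i<n. if \<nu> i \<in> S then \<bar>A i (\<nu> i)\<bar> else \<bar>r i - A i k\<bar>)" using key by linarith
      moreover have "(\<Sum>i<n. \<bar>r i + (\<Sum>k'\<in>insert k S. A i k' * em' k')\<bar>) = (\<Sum>i<n. \<bar>(r i - A i k) + (\<Sum>k\<in>S. A i k * em k)\<bar>)"
        by (intro sum.cong refl) (simp add: sm)
      ultimately show ?thesis using m(2) em'_ok by (intro exI[of _ em']) auto
    qed
  qed
qed

lemma adm_nu: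
  assumes adm: "admissible n xs"
  shows "(\<Sum>i<n. \<bar>xs i (\<nu> i)\<bar>) \<le> 1"
proof -
  define S where "S = \<nu> ` {..<n}"
  have fS: "finite S" unfolding S_def by simp
  obtain \<epsilon> where e1: "\<forall>k. \<epsilon> k = 1 \<or> \<epsilon> k = -1"
    and e2: "(\<Sum>i<n. (if \<nu> i \<in> S then \<bar>xs i (\<nu> i)\<bar> else \<bar>0\<bar>)) \<le> (\<Sum>i<n. \<bar>0 + (\<Sum>k\<in>S. xs i k * \<epsilon> k)\<bar>)"
    using sign_choice[OF fS, where n=n and A="\<lambda>i k. xs i k" and \<nu>=\<nu>, rule_format, of "\<lambda>_. 0"] by blast
  have lhs: "(\<Sum>i<n. (if \<nu> i \<in> S then \<bar>xs i (\<nu> i)\<bar> else \<bar>0\<bar>)) = (\<Sum>i<n. \<bar>xs i (\<nu> i)\<bar>)"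
    by (intro sum.cong) (auto simp: S_def)
  define x where "x = (\<lambda>k. if k \<in> S then \<epsilon> k else 0)"
  obtain N where N: "S \<subseteq> {..<N}" proof (rule that[of "Suc (Max S)"])
    show "S \<subseteq> {..<Suc (Max S)}" using fS by (auto simp: less_Suc_eq_le)
  qed
  have "eventually (\<lambda>k. x k = 0) sequentially"
    unfolding eventually_sequentially using N by (intro exI[of _ N]) (auto simp: x_def)
  hence "x \<longlonglongrightarrow> 0" by (simp add: tendsto_eventually)
  hence xc0: "x \<in> c0" unfolding c0_def by simp
  have xn: "c0_norm x \<le> 1" unfolding c0_norm_def
  proof (rule cSUP_least)
    fix k show "\<bar>x k\<bar> \<le> 1" using e1[rule_format, of k] by (auto simp: x_def)
  qed simp
  have pr: "pairing (xs i) x = (\<Sum>k\<in>S. xs i k * \<epsilon> k)" for i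
  proof -
    have "pairing (xs i) x = (\<Sum>k\<in>S. xs i k * x k)"
      unfolding pairing_def by (rule suminf_finite[OF fS]) (auto simp: x_def)
    also have "\<dots> = (\<Sum>k\<in>S. xs i k * \<epsilon> k)" by (intro sum.cong) (auto simp: x_def)
    finally show ?thesis .
  qed
  have "(\<Sum>i<n. \<bar>pairing (xs i) x\<bar>) \<le> 1" using adm xc0 xn unfolding admissible_def by blast
  thus ?thesis using e2 lhs pr by simp
qed

lemma adm_l1: "admissible n xs \<Longrightarrow> i < n \<Longrightarrow> xs i \<in> l1"
  unfolding admissible_def by blast

lemma adm_Mx:
  assumes adm: "admissible n xs"
  shows "(\<Sum>i<n. Mx (xs i)) \<le> 1"
proof -
  have main: "(\<Sum>i<n. Mx (xs i)) \<le> 1 + real n * d" if d: "d > 0" for d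
  proof -
    have "\<forall>i. \<exists>m. i < n \<longrightarrow> Mx (xs i) - d < \<bar>xs i m\<bar>"
    proof (intro allI)
      fix i show "\<exists>m. i < n \<longrightarrow> Mx (xs i) - d < \<bar>xs i m\<bar>"
      proof (cases "i < n")
        case True
        have "Mx (xs i) - d < (SUP m. \<bar>xs i m\<bar>)" using d unfolding Mx_def by simp
        then obtain m where "Mx (xs i) - d < \<bar>xs i m\<bar>"
          using less_cSUP_iff[of UNIV "\<lambda>m. \<bar>xs i m\<bar>"] l1_bdd[OF adm_l1[OF adm True]] by auto
        thus ?thesis by blast
      qed auto
    qed
    then obtain \<nu> where nu: "\<And>i. i < n \<Longrightarrow> Mx (xs i) - d < \<bar>xs i (\<nu> i)\<bar>" by metis
    have "(\<Sum>i<n. Mx (xs i)) \<le> (\<Sum>i<n. \<bar>xs i (\<nu> i)\<bar> + d)"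
      by (rule sum_mono) (use nu in \<open>fastforce\<close>)
    also have "\<dots> = (\<Sum>i<n. \<bar>xs i (\<nu> i)\<bar>) + real n * d" by (simp add: sum.distrib)
    also have "\<dots> \<le> 1 + real n * d" using adm_nu[OF adm] by simp
    finally show ?thesis .
  qed
  show ?thesis
  proof (rule field_le_epsilon)
    fix e :: real assume e: "0 < e"
    have "(\<Sum>i<n. Mx (xs i)) \<le> 1 + real n * (e / (real n + 1))" using main[of "e / (real n + 1)"] e by simp
    also have "real n * (e / (real n + 1)) \<le> e" using e by (simp add: field_simps)
    finally show "(\<Sum>i<n. Mx (xs i)) \<le> 1 + e" by simp
  qed
qed

lemma fbl_set_bound:
  assumes "\<And>a. a \<in> l1 \<Longrightarrow> \<bar>h a\<bar> \<le> C * Mx a" "0 \<le> C"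
  shows "\<forall>y\<in>fbl_norm_set h. y \<le> C"
proof
  fix y assume "y \<in> fbl_norm_set h"
  then obtain n xs where y: "y = (\<Sum>i<n. \<bar>h (xs i)\<bar>)" and adm: "admissible n xs"
    by (auto simp: fbl_norm_set_def)
  have "y \<le> (\<Sum>i<n. C * Mx (xs i))" unfolding y
    by (rule sum_mono) (use assms(1) adm_l1[OF adm] in auto)
  also have "\<dots> = C * (\<Sum>i<n. Mx (xs i))" by (simp add: sum_distrib_left)
  also have "\<dots> \<le> C * 1" by (rule mult_left_mono[OF adm_Mx[OF adm] assms(2)])
  finally show "y \<le> C" by simp
qed

lemma fbl_set_ne: "0 \<in> fbl_norm_set h"
proof -
  have "admissible 0 xs" for xs unfolding admissible_def by simp
  thus ?thesis unfolding fbl_norm_set_def by force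
qed

lemma fbl_norm_le:
  assumes "\<And>a. a \<in> l1 \<Longrightarrow> \<bar>h a\<bar> \<le> C * Mx a" "0 \<le> C"
  shows "bdd_above (fbl_norm_set h)" "fbl_norm h \<le> C"
proof -
  have b: "\<forall>y\<in>fbl_norm_set h. y \<le> C" by (rule fbl_set_bound[OF assms])
  thus "bdd_above (fbl_norm_set h)" by (auto intro: bdd_aboveI)
  show "fbl_norm h \<le> C" unfolding fbl_norm_def
    using fbl_set_ne b by (intro cSup_least) auto
qed

lemma fbl_norm_ge:
  assumes "bdd_above (fbl_norm_set h)" "admissible n xs"
  shows "(\<Sum>i<n. \<bar>h (xs i)\<bar>) \<le> fbl_norm h"
  unfolding fbl_norm_def using assms by (intro cSup_upper) (auto simp: fbl_norm_set_def)

lemma fbl_norm_unitv: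
  assumes "bdd_above (fbl_norm_set h)"
  shows "\<bar>h (unitv k)\<bar> \<le> fbl_norm h"
  using fbl_norm_ge[OF assms admissible_unitv[of k]] by simp

definition Ssum :: "(nat \<Rightarrow> real) \<Rightarrow> real" where
  "Ssum a = (\<Sum>m. \<bar>a m\<bar> / 2^m)"

definition ff :: "nat \<Rightarrow> (nat \<Rightarrow> real) \<Rightarrow> real" where
  "ff n a = (if a \<in> l1 then max 0 (2 * \<bar>a n\<bar> - 2^n * Ssum a) else 0)"

lemma Ssum_summable: "a \<in> l1 \<Longrightarrow> summable (\<lambda>m. \<bar>a m\<bar> / 2^m)"
proof -
  assume a: "a \<in> l1"
  have g: "summable (\<lambda>m. Mx a * (1/2::real)^m)"
    by (rule summable_mult, rule summable_geometric) simp
  have b:  "\<forall>m. norm (\<bar>a m\<bar> / 2^m) \<le> Mx a * (1/2)^m"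
  proof
    fix m
    have e: "norm (\<bar>a m\<bar> / 2^m) = \<bar>a m\<bar> * (1/2)^m" by (simp add: power_divide)
    show "norm (\<bar>a m\<bar> / 2^m) \<le> Mx a * (1/2)^m" unfolding e
      by (rule mult_right_mono[OF Mx_le[OF a]]) simp
  qed
  show ?thesis by (rule summable_comparison_test'[OF g, of 0]) (use b in blast)
qed

lemma Ssum_ge2: "a \<in> l1 \<Longrightarrow> finite I \<Longrightarrow> (\<Sum>m\<in>I. \<bar>a m\<bar> / 2^m) \<le> Ssum a"
  unfolding Ssum_def by (rule sum_le_suminf[OF Ssum_summable]) auto

lemma Ssum_ge: "a \<in> l1 \<Longrightarrow> \<bar>a n\<bar> / 2^n \<le> Ssum a"
  using Ssum_ge2[of a "{n}"] by simp

lemma ff_nonneg: "0 \<le> ff n a" unfolding ff_def by auto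

lemma ff_le: "a \<in> l1 \<Longrightarrow> ff n a \<le> \<bar>a n\<bar>"
proof -
  assume a: "a \<in> l1"
  have "\<bar>a n\<bar> \<le> Ssum a * 2^n" using Ssum_ge[OF a, of n] by (simp add: pos_divide_le_eq)
  thus ?thesis using a unfolding ff_def by (auto simp: mult.commute)
qed

lemma ff_le_Mx: "a \<in> l1 \<Longrightarrow> ff n a \<le> Mx a"
  using ff_le[of a n] Mx_le[of a n] by linarith

lemma ff_disj:
  assumes "ff n a \<noteq> 0" "m \<noteq> n" shows "ff m a = 0"
proof (rule ccontr)
  assume "ff m a \<noteq> 0"
  with assms have a: "a \<in> l1" and h1: "2 * \<bar>a n\<bar> > 2^n * Ssum a" and h2: "2 * \<bar>a m\<bar> > 2^m * Ssum a"
    unfolding ff_def by (auto split: if_splits)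
  have "(\<Sum>k\<in>{n,m}. \<bar>a k\<bar> / 2^k) \<le> Ssum a" using Ssum_ge2[OF a] by simp
  hence s: "\<bar>a n\<bar> / 2^n + \<bar>a m\<bar> / 2^m \<le> Ssum a" using assms(2) by simp
  have "\<bar>a n\<bar> / 2^n > Ssum a / 2" using h1 by (simp add: field_simps)
  moreover have "\<bar>a m\<bar> / 2^m > Ssum a / 2" using h2 by (simp add: field_simps)
  ultimately show False using s by linarith
qed

lemma Ssum_unitv: "Ssum (unitv n) = 1 / 2^n"
proof -
  have "(\<lambda>m. \<bar>unitv n m\<bar> / 2^m) = (\<lambda>m. if m = n then 1 / 2^m else 0)"
    by (auto simp: unitv_def)
  thus ?thesis unfolding Ssum_def using sums_single[of n "\<lambda>m. 1 / 2^m :: real"] sums_unique by metis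
qed

lemma ff_unitv: "ff n (unitv n) = 1"
proof -
  have "unitv n n = 1" by (simp add: unitv_def)
  thus ?thesis using unitv_l1[of n] by (simp add: ff_def Ssum_unitv)
qed

lemma usum1:
  assumes "ff n0 a \<noteq> 0" shows "(\<Sum>n. c n * ff n a) = c n0 * ff n0 a"
proof -
  have "(\<lambda>n. c n * ff n a) = (\<lambda>n. if n = n0 then c n * ff n a else 0)"
    using ff_disj[OF assms] by auto
  thus ?thesis using sums_single[of n0 "\<lambda>n. c n * ff n a"] sums_unique by metis
qed

lemma usum0:
  assumes "\<forall>n. ff n a = 0" shows "(\<Sum>n. c n * ff n a) = 0"
  using assms by simp

lemma psum1:
  assumes "ff n0 a \<noteq> 0" shows "(\<Sum>n<N. c n * ff n a) = (if n0 < N then c n0 * ff n0 a else 0)"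
proof -
  have "(\<Sum>n<N. c n * ff n a) = (\<Sum>n<N. if n = n0 then c n * ff n a else 0)"
    using ff_disj[OF assms] by (intro sum.cong) auto
  thus ?thesis by (simp add: sum.delta)
qed

definition uu :: "(nat \<Rightarrow> real) \<Rightarrow> (nat \<Rightarrow> real) \<Rightarrow> real" where
  "uu x = (\<lambda>a. \<Sum>n. x n * ff n a)"

lemma uu_tail:
  assumes "\<And>n. n \<ge> N \<Longrightarrow> \<bar>c n\<bar> \<le> E" "0 \<le> E" "a \<in> l1"
  shows "\<bar>uu c a - (\<Sum>n<N. c n * ff n a)\<bar> \<le> E * Mx a"
proof (cases "\<exists>n0. ff n0 a \<noteq> 0")
  case True
  then obtain n0 where n0: "ff n0 a \<noteq> 0" by blast
  show ?thesis
  proof (cases "n0 < N")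
    case True
    thus ?thesis using usum1[OF n0] psum1[OF n0] Mx_nonneg[OF assms(3)] assms(2) by (simp add: uu_def)
  next
    case False
    hence "\<bar>uu c a - (\<Sum>n<N. c n * ff n a)\<bar> = \<bar>c n0\<bar> * ff n0 a"
      using usum1[OF n0] psum1[OF n0] ff_nonneg by (simp add: uu_def abs_mult)
    also have "\<dots> \<le> E * Mx a"
      using False assms(1)[of n0] ff_le_Mx[OF assms(3), of n0] ff_nonneg[of n0 a] assms(2)
      by (intro mult_mono) auto
    finally show ?thesis .
  qed
next
  case False
  thus ?thesis using Mx_nonneg[OF assms(3)] assms(2) by (simp add: uu_def)
qed

lemma uu_bound:
  assumes "x \<in> c0" "a \<in> l1"
  shows "\<bar>uu x a\<bar> \<le> c0_norm x * Mx a"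
  using uu_tail[of 0 x "c0_norm x" a] c0_le[OF assms(1)] c0_norm_nonneg[OF assms(1)] assms(2) by simp

lemma fvl_zero: "(\<lambda>a. 0) \<in> fvl"
proof -
  have "(\<lambda>a. 0 * delta (unitv 0) a) \<in> fvl" by (intro fvl.scale fvl.gen unitv_c0)
  thus ?thesis by simp
qed

lemma fvl_diff: "f \<in> fvl \<Longrightarrow> g \<in> fvl \<Longrightarrow> (\<lambda>a. f a - g a) \<in> fvl"
proof -
  assume "f \<in> fvl" "g \<in> fvl"
  hence "(\<lambda>a. f a + (-1) * g a) \<in> fvl" by (intro fvl.add fvl.scale)
  thus ?thesis by simp
qed

lemma fvl_abs: "f \<in> fvl \<Longrightarrow> (\<lambda>a. \<bar>f a\<bar>) \<in> fvl"
proof -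
  assume "f \<in> fvl"
  hence "(\<lambda>a. max (f a) ((-1) * f a)) \<in> fvl" by (intro fvl.max fvl.scale)
  moreover have "(\<lambda>a. max (f a) ((-1) * f a)) = (\<lambda>a. \<bar>f a\<bar>)" by (auto simp: abs_if max_def)
  ultimately show ?thesis by simp
qed

lemma fvl_max0: "f \<in> fvl \<Longrightarrow> (\<lambda>a. max 0 (f a)) \<in> fvl"
  using fvl.max[OF fvl_zero] by blast

lemma fvl_sum: "(\<And>i. i < (N::nat) \<Longrightarrow> F i \<in> fvl) \<Longrightarrow> (\<lambda>a. \<Sum>i<N. F i a) \<in> fvl"
proof (induction N)
  case 0 thus ?case using fvl_zero by simp
next
  case (Suc N)
  hence "(\<lambda>a. (\<Sum>i<N. F i a) + F N a) \<in> fvl" by (intro fvl.add) auto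
  thus ?case by simp
qed

lemma delta_unitv: "delta (unitv m) a = (if a \<in> l1 then a m else 0)"
  unfolding delta_def by (simp add: pairing_unitv2)

definition SK :: "nat \<Rightarrow> (nat \<Rightarrow> real) \<Rightarrow> real" where
  "SK K = (\<lambda>a. \<Sum>m<K. (1/2^m) * \<bar>delta (unitv m) a\<bar>)"

definition fK :: "nat \<Rightarrow> nat \<Rightarrow> (nat \<Rightarrow> real) \<Rightarrow> real" where
  "fK n K = (\<lambda>a. max 0 (2 * \<bar>delta (unitv n) a\<bar> - 2^n * SK K a))"

definition gg :: "(nat \<Rightarrow> real) \<Rightarrow> nat \<Rightarrow> nat \<Rightarrow> (nat \<Rightarrow> real) \<Rightarrow> real" where
  "gg x N K = (\<lambda>a. \<Sum>n<N. x n * fK n K a)"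

lemma SK_fvl: "SK K \<in> fvl"
  unfolding SK_def by (intro fvl_sum fvl.scale fvl_abs fvl.gen unitv_c0)

lemma fK_fvl: "fK n K \<in> fvl"
  unfolding fK_def by (intro fvl_max0 fvl_diff fvl.scale fvl_abs fvl.gen unitv_c0 SK_fvl)

lemma gg_fvl: "gg x N K \<in> fvl"
  unfolding gg_def by (intro fvl_sum fvl.scale fK_fvl)

lemma Ssum_SK:
  assumes a: "a \<in> l1"
  shows "\<bar>Ssum a - SK K a\<bar> \<le> Mx a * 2 / 2^K"
proof -
  have sm: "summable (\<lambda>m. \<bar>a m\<bar> / 2^m)" by (rule Ssum_summable[OF a])
  have sk: "SK K a = (\<Sum>m<K. \<bar>a m\<bar> / 2^m)" unfolding SK_def delta_unitv using a by simp
  have "Ssum a = (\<Sum>m. \<bar>a (m+K)\<bar> / 2^(m+K)) + (\<Sum>m<K. \<bar>a m\<bar> / 2^m)"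
    unfolding Ssum_def by (rule suminf_split_initial_segment[OF sm])
  hence d: "Ssum a - SK K a = (\<Sum>m. \<bar>a (m+K)\<bar> / 2^(m+K))" using sk by simp
  have sm2: "summable (\<lambda>m. \<bar>a (m+K)\<bar> / 2^(m+K))"
    using summable_ignore_initial_segment[OF sm, of K] by simp
  have g: "summable (\<lambda>m. Mx a / 2^K * (1/2::real)^m)"
    by (rule summable_mult, rule summable_geometric) simp
  have le: "\<bar>a (m+K)\<bar> / 2^(m+K) \<le> Mx a / 2^K * (1/2)^m" for m
  proof -
    have "\<bar>a (m+K)\<bar> / 2^(m+K) = \<bar>a (m+K)\<bar> * ((1/2^K) * (1/2)^m)"
      by (simp add: power_add power_divide)
    also have "\<dots> \<le> Mx a * ((1/2^K) * (1/2)^m)"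
      by (rule mult_right_mono[OF Mx_le[OF a]]) simp
    finally show ?thesis by simp
  qed
  have "(\<Sum>m. \<bar>a (m+K)\<bar> / 2^(m+K)) \<le> (\<Sum>m. Mx a / 2^K * (1/2::real)^m)"
    by (rule suminf_le[OF le sm2 g])
  also have "\<dots> = Mx a / 2^K * 2"
    using suminf_mult[OF summable_geometric[of "1/2::real"], of "Mx a / 2^K"] suminf_geometric[of "1/2::real"]
    by simp
  finally have u: "(\<Sum>m. \<bar>a (m+K)\<bar> / 2^(m+K)) \<le> Mx a * 2 / 2^K" by simp
  have "0 \<le> (\<Sum>m. \<bar>a (m+K)\<bar> / 2^(m+K))" by (rule suminf_nonneg[OF sm2]) simp
  thus ?thesis using d u by simp
qed

lemma max0_lip: "\<bar>max 0 u - max 0 (v::real)\<bar> \<le> \<bar>u - v\<bar>"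
  by (cases "u \<le> 0"; cases "v \<le> 0") auto

lemma ff_fK:
  assumes a: "a \<in> l1"
  shows "\<bar>ff n a - fK n K a\<bar> \<le> 2^n * (Mx a * 2 / 2^K)"
proof -
  have e1: "ff n a = max 0 (2 * \<bar>a n\<bar> - 2^n * Ssum a)" using a by (simp add: ff_def)
  have e2: "fK n K a = max 0 (2 * \<bar>a n\<bar> - 2^n * SK K a)" using a by (simp add: fK_def delta_unitv)
  have "\<bar>ff n a - fK n K a\<bar> \<le> \<bar>(2 * \<bar>a n\<bar> - 2^n * Ssum a) - (2 * \<bar>a n\<bar> - 2^n * SK K a)\<bar>"
    unfolding e1 e2 by (rule max0_lip)
  also have "\<dots> = \<bar>2^n * (SK K a - Ssum a)\<bar>" by (simp add: algebra_simps)
  also have "\<dots> = 2^n * \<bar>Ssum a - SK K a\<bar>" by (simp add: abs_mult abs_minus_commute)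
  also have "\<dots> \<le> 2^n * (Mx a * 2 / 2^K)" by (rule mult_left_mono[OF Ssum_SK[OF a]]) simp
  finally show ?thesis .
qed

lemma uu_approx:
  assumes x: "x \<in> c0" and e: "e > 0"
  shows "\<exists>g\<in>fvl. fbl_norm (\<lambda>a. uu x a - g a) < e"
proof -
  define B where "B = c0_norm x"
  have B0: "0 \<le> B" unfolding B_def by (rule c0_norm_nonneg[OF x])
  have xB: "\<bar>x n\<bar> \<le> B" for n unfolding B_def by (rule c0_le[OF x])
  have "x \<longlonglongrightarrow> 0" using x unfolding c0_def by simp
  moreover have "e/4 > 0" using e by simp
  ultimately obtain N where N: "\<forall>n\<ge>N. norm (x n - 0) < e/4" by (rule LIMSEQ_D[elim_format]) blast
  have xN: "\<bar>x n\<bar> \<le> e/4" if "n \<ge> N" for n using N that by fastforce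
  define D where "D = B * real N * 2^N * 2"
  obtain K where K: "4 * D / e < 2^K" using real_arch_pow[of "2::real" "4 * D / e"] by auto
  have DK: "D / 2^K < e / 4"
  proof -
    have "4 * D < e * 2^K" using K e by (simp add: field_simps)
    thus ?thesis by (simp add: field_simps)
  qed
  have D0: "0 \<le> D" unfolding D_def using B0 by simp
  define h where "h = (\<lambda>a. uu x a - gg x N K a)"
  have hb: "\<bar>h a\<bar> \<le> (e/4 + D / 2^K) * Mx a" if a: "a \<in> l1" for a
  proof -
    have M0: "0 \<le> Mx a" by (rule Mx_nonneg[OF a])
    have split: "h a = (uu x a - (\<Sum>n<N. x n * ff n a)) + (\<Sum>n<N. x n * (ff n a - fK n K a))"
      unfolding h_def gg_def by (simp add: algebra_simps sum_subtractf)
    have t1: "\<bar>uu x a - (\<Sum>n<N. x n * ff n a)\<bar> \<le> e/4 * Mx a"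
      by (rule uu_tail[OF xN _ a]) (use e in auto)
    have "\<bar>\<Sum>n<N. x n * (ff n a - fK n K a)\<bar> \<le> (\<Sum>n<N. \<bar>x n * (ff n a - fK n K a)\<bar>)"
      by (rule sum_abs)
    also have "\<dots> \<le> (\<Sum>n<N. B * (2^N * (Mx a * 2 / 2^K)))"
    proof (rule sum_mono)
      fix n assume n: "n \<in> {..<N}"
      have "\<bar>ff n a - fK n K a\<bar> \<le> 2^n * (Mx a * 2 / 2^K)" by (rule ff_fK[OF a])
      also have "\<dots> \<le> 2^N * (Mx a * 2 / 2^K)"
        by (rule mult_right_mono) (use n M0 in \<open>auto intro: power_increasing\<close>)
      finally have "\<bar>ff n a - fK n K a\<bar> \<le> 2^N * (Mx a * 2 / 2^K)" .
      thus "\<bar>x n * (ff n a - fK n K a)\<bar> \<le> B * (2^N * (Mx a * 2 / 2^K))"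
        unfolding abs_mult by (rule mult_mono[OF xB]) (use B0 in auto)
    qed
    also have "\<dots> = D / 2^K * Mx a" unfolding D_def by simp
    finally have t2: "\<bar>\<Sum>n<N. x n * (ff n a - fK n K a)\<bar> \<le> D / 2^K * Mx a" .
    have "\<bar>h a\<bar> \<le> \<bar>uu x a - (\<Sum>n<N. x n * ff n a)\<bar> + \<bar>\<Sum>n<N. x n * (ff n a - fK n K a)\<bar>"
      unfolding split by (rule abs_triangle_ineq)
    thus ?thesis using t1 t2 unfolding distrib_right by linarith
  qed
  have "fbl_norm h \<le> e/4 + D / 2^K"
    by (rule fbl_norm_le(2)[OF hb]) (use e D0 in auto)
  hence "fbl_norm h < e" using DK e by linarith
  thus ?thesis using gg_fvl unfolding h_def by blast
qed

lemma uu_off: "a \<notin> l1 \<Longrightarrow> uu x a = 0"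
  unfolding uu_def ff_def by simp

lemma uu_FBL: "x \<in> c0 \<Longrightarrow> uu x \<in> FBL"
proof -
  assume x: "x \<in> c0"
  have "bdd_above (fbl_norm_set (uu x))"
    by (rule fbl_norm_le(1)[OF uu_bound[OF x] c0_norm_nonneg[OF x]])
  thus ?thesis unfolding FBL_def using uu_off uu_approx[OF x] by simp
qed

lemma summable_ax:
  assumes a: "a \<in> l1" and x: "x \<in> c0"
  shows "summable (\<lambda>m. a m * x m)"
proof -
  have "summable (\<lambda>m. \<bar>a m\<bar>)" using a by (simp add: l1_def)
  hence g: "summable (\<lambda>m. \<bar>a m\<bar> * c0_norm x)" by (rule summable_mult2)
  show ?thesis
  proof (rule summable_comparison_test'[OF g, of 0])
    fix m :: nat
    show "norm (a m * x m) \<le> \<bar>a m\<bar> * c0_norm x"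
      unfolding real_norm_def abs_mult by (rule mult_left_mono[OF c0_le[OF x]]) simp
  qed
qed

lemma delta_adm:
  assumes x: "x \<in> c0" and adm: "admissible n xs"
  shows "(\<Sum>i<n. \<bar>delta x (xs i)\<bar>) \<le> c0_norm x"
proof -
  define B where "B = c0_norm x"
  have B0: "0 \<le> B" unfolding B_def by (rule c0_norm_nonneg[OF x])
  have xB: "\<bar>x k\<bar> \<le> B" for k unfolding B_def by (rule c0_le[OF x])
  have dl: "delta x (xs i) = pairing (xs i) x" if "i < n" for i
    using adm_l1[OF adm that] by (simp add: delta_def)
  show ?thesis
  proof (cases "B = 0")
    case True
    have x0: "x k = 0" for k using xB[of k] True by simp
    have p0: "pairing a x = 0" for a by (simp add: pairing_def x0)
    have "delta x a = 0" for a by (simp add: delta_def p0)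
    hence "(\<Sum>i<n. \<bar>delta x (xs i)\<bar>) = 0" by simp
    thus ?thesis using B0 unfolding B_def by simp
  next
    case False
    hence Bp: "B > 0" using B0 by simp
    define y where "y = (\<lambda>k. x k / B)"
    have "x \<longlonglongrightarrow> 0" using x unfolding c0_def by simp
    hence "y \<longlonglongrightarrow> 0" unfolding y_def by (rule tendsto_divide_zero)
    hence yc: "y \<in> c0" unfolding c0_def by simp
    have yn: "c0_norm y \<le> 1" unfolding c0_norm_def
    proof (rule cSUP_least)
      fix k
      have "\<bar>x k\<bar> / B \<le> 1" using xB[of k] Bp by (simp add: pos_divide_le_eq)
      thus "\<bar>y k\<bar> \<le> 1" using Bp by (simp add: y_def)
    qed simp
    have py: "pairing (xs i) y = pairing (xs i) x / B" if "i < n" for i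
    proof -
      have "(\<lambda>m. xs i m * y m) = (\<lambda>m. xs i m * x m / B)" by (simp add: y_def)
      thus ?thesis unfolding pairing_def
        using suminf_divide[OF summable_ax[OF adm_l1[OF adm that] x], of B] by simp
    qed
    have "\<forall>z\<in>c0. c0_norm z \<le> 1 \<longrightarrow> (\<Sum>i<n. \<bar>pairing (xs i) z\<bar>) \<le> 1"
      using adm by (simp add: admissible_def)
    hence "(\<Sum>i<n. \<bar>pairing (xs i) y\<bar>) \<le> 1" using yc yn by blast
    moreover have "(\<Sum>i<n. \<bar>pairing (xs i) y\<bar>) = (\<Sum>i<n. \<bar>pairing (xs i) x\<bar>) / B"
      unfolding sum_divide_distrib using py Bp by (intro sum.cong) auto
    ultimately have "(\<Sum>i<n. \<bar>pairing (xs i) x\<bar>) / B \<le> 1" by simp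
    hence "(\<Sum>i<n. \<bar>pairing (xs i) x\<bar>) \<le> B" using Bp by (simp add: pos_divide_le_eq)
    moreover have "(\<Sum>i<n. \<bar>delta x (xs i)\<bar>) = (\<Sum>i<n. \<bar>pairing (xs i) x\<bar>)"
      using dl by (intro sum.cong) auto
    ultimately show ?thesis unfolding B_def by simp
  qed
qed

lemma fvl_props:
  assumes "g \<in> fvl"
  shows "(\<exists>C. \<forall>n xs. admissible n xs \<longrightarrow> (\<Sum>i<n. \<bar>g (xs i)\<bar>) \<le> C) \<and> (\<lambda>k. g (unitv k)) \<longlonglongrightarrow> 0"
  using assms
proof (induction rule: fvl.induct)
  case (gen x)
  have "(\<lambda>k. delta x (unitv k)) = x" using unitv_l1 by (simp add: delta_def pairing_unitv)
  moreover have "x \<longlonglongrightarrow> 0" using gen by (simp add: c0_def)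
  moreover have "\<forall>n xs. admissible n xs \<longrightarrow> (\<Sum>i<n. \<bar>delta x (xs i)\<bar>) \<le> c0_norm x"
    using delta_adm[OF gen] by blast
  ultimately show ?case by metis
next
  case (add f g)
  then obtain C1 C2 where C1: "\<forall>n xs. admissible n xs \<longrightarrow> (\<Sum>i<n. \<bar>f (xs i)\<bar>) \<le> C1"
    and C2: "\<forall>n xs. admissible n xs \<longrightarrow> (\<Sum>i<n. \<bar>g (xs i)\<bar>) \<le> C2" by blast
  have "admissible n xs \<longrightarrow> (\<Sum>i<n. \<bar>f (xs i) + g (xs i)\<bar>) \<le> C1 + C2" for n xs
  proof
    assume adm: "admissible n xs"
    have "(\<Sum>i<n. \<bar>f (xs i) + g (xs i)\<bar>) \<le> (\<Sum>i<n. \<bar>f (xs i)\<bar> + \<bar>g (xs i)\<bar>)"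
      by (rule sum_mono) (rule abs_triangle_ineq)
    also have "\<dots> \<le> C1 + C2" using C1 C2 adm by (simp add: sum.distrib add_mono)
    finally show "(\<Sum>i<n. \<bar>f (xs i) + g (xs i)\<bar>) \<le> C1 + C2" .
  qed
  moreover have "(\<lambda>k. f (unitv k) + g (unitv k)) \<longlonglongrightarrow> 0 + 0"
    using add by (intro tendsto_add) auto
  ultimately show ?case by (metis add.right_neutral)
next
  case (scale f c)
  then obtain C1 where C1: "\<forall>n xs. admissible n xs \<longrightarrow> (\<Sum>i<n. \<bar>f (xs i)\<bar>) \<le> C1" by blast
  have "admissible n xs \<longrightarrow> (\<Sum>i<n. \<bar>c * f (xs i)\<bar>) \<le> \<bar>c\<bar> * C1" for n xs
  proof
    assume adm: "admissible n xs"
    have "(\<Sum>i<n. \<bar>c * f (xs i)\<bar>) = \<bar>c\<bar> * (\<Sum>i<n. \<bar>f (xs i)\<bar>)"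
      by (simp add: abs_mult sum_distrib_left)
    also have "\<dots> \<le> \<bar>c\<bar> * C1" using C1 adm by (intro mult_left_mono) auto
    finally show "(\<Sum>i<n. \<bar>c * f (xs i)\<bar>) \<le> \<bar>c\<bar> * C1" .
  qed
  moreover have "(\<lambda>k. c * f (unitv k)) \<longlonglongrightarrow> c * 0"
    using scale by (intro tendsto_mult_left) auto
  ultimately show ?case by (metis mult_zero_right)
next
  case (max f g)
  then obtain C1 C2 where C1: "\<forall>n xs. admissible n xs \<longrightarrow> (\<Sum>i<n. \<bar>f (xs i)\<bar>) \<le> C1"
    and C2: "\<forall>n xs. admissible n xs \<longrightarrow> (\<Sum>i<n. \<bar>g (xs i)\<bar>) \<le> C2" by blast
  have "admissible n xs \<longrightarrow> (\<Sum>i<n. \<bar>max (f (xs i)) (g (xs i))\<bar>) \<le> C1 + C2" for n xs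
  proof
    assume adm: "admissible n xs"
    have "(\<Sum>i<n. \<bar>max (f (xs i)) (g (xs i))\<bar>) \<le> (\<Sum>i<n. \<bar>f (xs i)\<bar> + \<bar>g (xs i)\<bar>)"
      by (rule sum_mono) auto
    also have "\<dots> \<le> C1 + C2" using C1 C2 adm by (simp add: sum.distrib add_mono)
    finally show "(\<Sum>i<n. \<bar>max (f (xs i)) (g (xs i))\<bar>) \<le> C1 + C2" .
  qed
  moreover have "(\<lambda>k. max (f (unitv k)) (g (unitv k))) \<longlonglongrightarrow> max 0 0"
    using max by (intro tendsto_max) auto
  ultimately show ?case by (metis max.idem)
qed

lemma FBL_lim:
  assumes f: "f \<in> FBL"
  shows "(\<lambda>k. f (unitv k)) \<longlonglongrightarrow> 0"
proof (rule LIMSEQ_I)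
  fix r :: real assume r: "0 < r"
  have fb: "bdd_above (fbl_norm_set f)" using f by (simp add: FBL_def)
  have "\<forall>e>0. \<exists>g\<in>fvl. fbl_norm (\<lambda>a. f a - g a) < e" using f by (simp add: FBL_def)
  moreover have "r/2 > 0" using r by simp
  ultimately obtain g where g: "g \<in> fvl" and fg: "fbl_norm (\<lambda>a. f a - g a) < r/2" by blast
  obtain C where C: "\<forall>n xs. admissible n xs \<longrightarrow> (\<Sum>i<n. \<bar>g (xs i)\<bar>) \<le> C"
    using fvl_props[OF g] by blast
  have "\<forall>y\<in>fbl_norm_set (\<lambda>a. f a - g a). y \<le> fbl_norm f + C"
  proof
    fix y assume "y \<in> fbl_norm_set (\<lambda>a. f a - g a)"
    then obtain n xs where y: "y = (\<Sum>i<n. \<bar>f (xs i) - g (xs i)\<bar>)" and adm: "admissible n xs"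
      by (auto simp: fbl_norm_set_def)
    have "y \<le> (\<Sum>i<n. \<bar>f (xs i)\<bar> + \<bar>g (xs i)\<bar>)" unfolding y
      by (rule sum_mono) (rule abs_triangle_ineq4)
    also have "\<dots> = (\<Sum>i<n. \<bar>f (xs i)\<bar>) + (\<Sum>i<n. \<bar>g (xs i)\<bar>)" by (simp add: sum.distrib)
    also have "\<dots> \<le> fbl_norm f + C" using fbl_norm_ge[OF fb adm] C adm by (simp add: add_mono)
    finally show "y \<le> fbl_norm f + C" .
  qed
  hence fgb: "bdd_above (fbl_norm_set (\<lambda>a. f a - g a))" by (auto intro: bdd_aboveI)
  have "(\<lambda>k. g (unitv k)) \<longlonglongrightarrow> 0" using fvl_props[OF g] by blast
  moreover have "r/2 > 0" using r by simp
  ultimately obtain N where N: "\<forall>k\<ge>N. norm (g (unitv k) - 0) < r/2" by (rule LIMSEQ_D[elim_format]) blast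
  show "\<exists>no. \<forall>n\<ge>no. norm (f (unitv n) - 0) < r"
  proof (intro exI allI impI)
    fix k assume k: "N \<le> k"
    have "\<bar>f (unitv k) - g (unitv k)\<bar> \<le> fbl_norm (\<lambda>a. f a - g a)"
      using fbl_norm_unitv[OF fgb, of k] by simp
    moreover have "\<bar>g (unitv k)\<bar> < r/2" using N k by auto
    ultimately show "norm (f (unitv k) - 0) < r" using fg by simp
  qed
qed

definition TT :: "((nat \<Rightarrow> real) \<Rightarrow> real) \<Rightarrow> nat \<Rightarrow> real" where
  "TT f = (\<lambda>n. f (unitv n))"

lemma uu_single: "ff n0 a \<noteq> 0 \<Longrightarrow> uu z a = z n0 * ff n0 a"
  unfolding uu_def by (rule usum1)

lemma uu_add: "uu (\<lambda>n. x n + y n) = (\<lambda>a. uu x a + uu y a)"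
proof
  fix a show "uu (\<lambda>n. x n + y n) a = uu x a + uu y a"
  proof (cases "\<exists>n0. ff n0 a \<noteq> 0")
    case True
    then obtain n0 where n0: "ff n0 a \<noteq> 0" by blast
    show ?thesis by (simp add: uu_single[OF n0] distrib_right)
  qed (simp add: uu_def)
qed

lemma uu_scale: "uu (\<lambda>n. c * x n) = (\<lambda>a. c * uu x a)"
proof
  fix a show "uu (\<lambda>n. c * x n) a = c * uu x a"
  proof (cases "\<exists>n0. ff n0 a \<noteq> 0")
    case True
    then obtain n0 where n0: "ff n0 a \<noteq> 0" by blast
    show ?thesis by (simp add: uu_single[OF n0])
  qed (simp add: uu_def)
qed

lemma max_mult_nonneg: "(0::real) \<le> f \<Longrightarrow> max u v * f = max (u * f) (v * f)"
proof (cases "u \<le> v")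
  case True
  assume f: "0 \<le> f"
  have "u * f \<le> v * f" by (rule mult_right_mono[OF True f])
  thus ?thesis using True by (simp add: max_def)
next
  case False
  assume f: "0 \<le> f"
  have "v * f \<le> u * f" using False by (intro mult_right_mono[OF _ f]) simp
  thus ?thesis using False by (simp add: max_def)
qed

lemma uu_max: "uu (\<lambda>n. max (x n) (y n)) = (\<lambda>a. max (uu x a) (uu y a))"
proof
  fix a show "uu (\<lambda>n. max (x n) (y n)) a = max (uu x a) (uu y a)"
  proof (cases "\<exists>n0. ff n0 a \<noteq> 0")
    case True
    then obtain n0 where n0: "ff n0 a \<noteq> 0" by blast
    show ?thesis by (simp add: uu_single[OF n0] max_mult_nonneg[OF ff_nonneg])
  qed (simp add: uu_def)
qed

lemma TT_uu: "TT (uu x) = x"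
proof
  fix k
  have k: "ff k (unitv k) \<noteq> 0" by (simp add: ff_unitv)
  show "TT (uu x) k = x k" unfolding TT_def by (simp add: uu_single[OF k] ff_unitv)
qed

lemma uu_iso:
  assumes x: "x \<in> c0"
  shows "fbl_norm (uu x) = c0_norm x"
proof (rule antisym)
  show "fbl_norm (uu x) \<le> c0_norm x"
    by (rule fbl_norm_le(2)[OF uu_bound[OF x] c0_norm_nonneg[OF x]])
  have b: "bdd_above (fbl_norm_set (uu x))"
    by (rule fbl_norm_le(1)[OF uu_bound[OF x] c0_norm_nonneg[OF x]])
  show "c0_norm x \<le> fbl_norm (uu x)" unfolding c0_norm_def
  proof (rule cSUP_least)
    fix n
    have "uu x (unitv n) = x n" using fun_cong[OF TT_uu[of x], of n] by (simp add: TT_def)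
    thus "\<bar>x n\<bar> \<le> fbl_norm (uu x)" using fbl_norm_unitv[OF b, of n] by simp
  qed simp
qed

lemma TT_c0: "f \<in> FBL \<Longrightarrow> TT f \<in> c0"
  unfolding TT_def c0_def using FBL_lim by simp

lemma TT_bound: "f \<in> FBL \<Longrightarrow> c0_norm (TT f) \<le> 1 * fbl_norm f"
proof -
  assume f: "f \<in> FBL"
  have fb: "bdd_above (fbl_norm_set f)" using f by (simp add: FBL_def)
  show ?thesis unfolding c0_norm_def TT_def
    by (simp, rule cSUP_least) (use fbl_norm_unitv[OF fb] in auto)
qed

theorem mainTheorem2:
  shows "\<exists>u T. bl_hom_c0_FBL u \<and> (\<forall>x\<in>c0. fbl_norm (u x) = c0_norm x) \<and>
           bl_hom_FBL_c0 T \<and> T ` FBL = c0 \<and> (\<forall>x\<in>c0. T (u x) = x)"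
proof (intro exI conjI)
  show "bl_hom_c0_FBL uu" unfolding bl_hom_c0_FBL_def
  proof (intro conjI ballI allI exI[of _ 1])
    fix x assume "x \<in> c0" thus "uu x \<in> FBL" by (rule uu_FBL)
  next
    fix x assume "x \<in> c0" thus "fbl_norm (uu x) \<le> 1 * c0_norm x" using uu_iso by simp
  qed (simp_all add: uu_add uu_scale uu_max)
  show "\<forall>x\<in>c0. fbl_norm (uu x) = c0_norm x" using uu_iso by blast
  show "bl_hom_FBL_c0 TT" unfolding bl_hom_FBL_c0_def
  proof (intro conjI ballI allI exI[of _ 1])
    fix f assume "f \<in> FBL" thus "TT f \<in> c0" by (rule TT_c0)
  next
    fix f assume "f \<in> FBL" thus "c0_norm (TT f) \<le> 1 * fbl_norm f" by (rule TT_bound)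
  qed (auto simp: TT_def)
  show "TT ` FBL = c0"
  proof
    show "TT ` FBL \<subseteq> c0" using TT_c0 by blast
    show "c0 \<subseteq> TT ` FBL"
    proof
      fix x assume "x \<in> c0"
      hence "uu x \<in> FBL" by (rule uu_FBL)
      thus "x \<in> TT ` FBL" using TT_uu[of x] by (metis image_eqI)
    qed
  qed
  show "\<forall>x\<in>c0. TT (uu x) = x" using TT_uu by blast
qed

end
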